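(* The matrix $$R_\Omega=\begin{pmatrix}q&0&0&0\\0&q&q-q^{-1}&0\\0&0&q^{-1}&0\\0&0&0&-q^{-1}\end{pmatrix}$$ is superizable with $p(1)=0$, $p(2)=1$, and the super FRT bialgebra $A(\underline R_\Omega)$ of $\underline R_\Omega^a{}_c{}^b{}_d=(-1)^{p(a)p(b)}(R_\Omega)^a{}_c{}^b{}_d$ is the super-bialgebra generated by $1$ and $\mathbf u=\begin{pmatrix}\alpha&\beta\\\gamma&\delta\end{pmatrix}$, $\alpha,\delta$ even and $\beta,\gamma$ odd, with relations $\beta\alpha=\alpha\beta$, $\gamma\alpha=q^2\alpha\gamma$, $\delta\beta=\beta\delta$, $\delta\gamma=q^{-2}\gamma\delta$, $\gamma\beta=-q^2\beta\gamma$, $\delta\alpha-\alpha\delta=(1-q^2)\beta\gamma$, $\beta^2=\gamma^2=0$, and matrix super-coproduct $\underline\Delta\mathbf u=\mathbf u\otimes\mathbf u$, $\underline\varepsilon(\mathbf u)=\mathrm{id}$. If $\alpha,\delta$ are made invertible, one obtains a super-quantum group $GL^\Omega_q(1|1)$ with antipode $\underline S(\mathbf u)=\begin{pmatrix}\alpha^{-1}+\alpha^{-1}\beta\delta^{-1}\gamma\alpha^{-1}&-\alpha^{-1}\beta\delta^{-1}\\-\delta^{-1}\gamma\alpha^{-1}&\delta^{-1}+\delta^{-1}\gamma\alpha^{-1}\beta\delta^{-1}\end{pmatrix}$, and the super-determinant $\underline{\det}(\mathbf u)=\alpha\delta^{-1}-\beta\delta^{-1}\gamma\delta^{-1}$ is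 a central, even, group-like element.
   Context: $4\times4$ matrices have entries $R^a{}_c{}^b{}_d$ with row index $(a,b)$, column $(c,d)$, ordered $11,12,21,22$; repeated indices summed. $R$ is superizable w.r.t. $p$ if $R^a{}_c{}^b{}_d=0$ whenever $p(a)+p(b)-p(c)-p(d)\not\equiv0\pmod2$. The super FRT bialgebra $A(\underline R)$ is generated by $1$ and $u^i{}_j$ of degree $p(i)+p(j)$ with relations $(-1)^{p(a)p(b)+p(c)p(e)}\underline R^a{}_f{}^b{}_e\,u^f{}_c\,u^e{}_d=(-1)^{p(c)p(d)+p(r)p(a)}u^b{}_r\,u^a{}_s\,\underline R^s{}_c{}^r{}_d$, super-coproduct $\underline\Delta u^i{}_j=\sum_ku^i{}_k\otimes u^k{}_j$ in the graded tensor product, counit $\delta^i_j$; here $u^1{}_1=\alpha$, $u^1{}_2=\beta$, $u^2{}_1=\gamma$, $u^2{}_2=\delta$. *)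

theory Defs
  imports Main
begin

definition pOm :: "nat \<Rightarrow> nat" where
  "pOm i = (if i = 2 then 1 else 0)"

text \<open>A 4x4 matrix is stored as R a c b d = entry in row (a,b), column (c,d).
  The matrix R_Omega:\<close>
definition ROm :: "'k::field \<Rightarrow> nat \<Rightarrow> nat \<Rightarrow> nat \<Rightarrow> nat \<Rightarrow> 'k" where
  "ROm q a c b d =
     (if (a,b,c,d) = (1,1,1,1) then q
      else if (a,b,c,d) = (1,2,1,2) then q
      else if (a,b,c,d) = (1,2,2,1) then q - inverse q
      else if (a,b,c,d) = (2,1,2,1) then inverse q
      else if (a,b,c,d) = (2,2,2,2) then - inverse q
      else 0)"

definition superizable :: "(nat \<Rightarrow> nat) \<Rightarrow> (nat \<Rightarrow> nat \<Rightarrow> nat \<Rightarrow> nat \<Rightarrow> 'k::ring_1) \<Rightarrow> bool" where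
  "superizable p R \<longleftrightarrow>
     (\<forall>a\<in>{1,2}. \<forall>b\<in>{1,2}. \<forall>c\<in>{1,2}. \<forall>d\<in>{1,2}.
        \<not> even (int (p a) + int (p b) - int (p c) - int (p d)) \<longrightarrow> R a c b d = 0)"

definition Rsup :: "(nat \<Rightarrow> nat) \<Rightarrow> (nat \<Rightarrow> nat \<Rightarrow> nat \<Rightarrow> nat \<Rightarrow> 'k::ring_1) \<Rightarrow> nat \<Rightarrow> nat \<Rightarrow> nat \<Rightarrow> nat \<Rightarrow> 'k" where
  "Rsup p R a c b d = (-1) ^ (p a * p b) * R a c b d"

text \<open>A k-algebra structure on the ring 'a, given by its structure map phi
  (a unital ring homomorphism from the field k into the centre of 'a).\<close>
definition k_alg :: "('k::field \<Rightarrow> 'a::ring_1) \<Rightarrow> bool" where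
  "k_alg \<phi> \<longleftrightarrow> \<phi> 1 = 1 \<and> (\<forall>x y. \<phi> (x + y) = \<phi> x + \<phi> y) \<and>
      (\<forall>x y. \<phi> (x * y) = \<phi> x * \<phi> y) \<and> (\<forall>x z. \<phi> x * z = z * \<phi> x)"

definition umat :: "'a \<Rightarrow> 'a \<Rightarrow> 'a \<Rightarrow> 'a \<Rightarrow> nat \<Rightarrow> nat \<Rightarrow> 'a" where
  "umat \<alpha> \<beta> \<gamma> \<delta> i j = (if i = 1 then (if j = 1 then \<alpha> else \<beta>) else (if j = 1 then \<gamma> else \<delta>))"

text \<open>The super FRT relations, for a product of generators given abstractly:
  prd f c e d stands for the product u^f_c u^e_d.\<close>
definition FRT_gen :: "('k::field \<Rightarrow> 'a::ring_1) \<Rightarrow> (nat \<Rightarrow> nat) \<Rightarrow> (nat \<Rightarrow> nat \<Rightarrow> nat \<Rightarrow> nat \<Rightarrow> 'k)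
     \<Rightarrow> (nat \<Rightarrow> nat \<Rightarrow> nat \<Rightarrow> nat \<Rightarrow> 'a) \<Rightarrow> bool" where
  "FRT_gen \<phi> p Rs prd \<longleftrightarrow>
     (\<forall>a\<in>{1,2}. \<forall>b\<in>{1,2}. \<forall>c\<in>{1,2}. \<forall>d\<in>{1,2}.
        (\<Sum>f\<in>{1,2}. \<Sum>e\<in>{1,2}. (-1) ^ (p a * p b + p c * p e) * \<phi> (Rs a f b e) * prd f c e d)
      = (\<Sum>r\<in>{1,2}. \<Sum>s\<in>{1,2}. (-1) ^ (p c * p d + p r * p a) * prd b r a s * \<phi> (Rs s c r d)))"

definition FRT :: "('k::field \<Rightarrow> 'a::ring_1) \<Rightarrow> (nat \<Rightarrow> nat) \<Rightarrow> (nat \<Rightarrow> nat \<Rightarrow> nat \<Rightarrow> nat \<Rightarrow> 'k)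
     \<Rightarrow> (nat \<Rightarrow> nat \<Rightarrow> 'a) \<Rightarrow> bool" where
  "FRT \<phi> p Rs u \<longleftrightarrow> FRT_gen \<phi> p Rs (\<lambda>f c e d. u f c * u e d)"

text \<open>The super FRT relations for u in the super-opposite algebra
  (product x *' y = (-1)^(|x||y|) y x, |u^i_j| = p i + p j); this is what it
  means that u is mapped by a super-anti-homomorphism.\<close>
definition FRT_sop :: "('k::field \<Rightarrow> 'a::ring_1) \<Rightarrow> (nat \<Rightarrow> nat) \<Rightarrow> (nat \<Rightarrow> nat \<Rightarrow> nat \<Rightarrow> nat \<Rightarrow> 'k)
     \<Rightarrow> (nat \<Rightarrow> nat \<Rightarrow> 'a) \<Rightarrow> bool" where
  "FRT_sop \<phi> p Rs u \<longleftrightarrow>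
     FRT_gen \<phi> p Rs (\<lambda>f c e d. (-1) ^ ((p f + p c) * (p e + p d)) * (u e d * u f c))"

definition omega_rels :: "('k::field \<Rightarrow> 'a::ring_1) \<Rightarrow> 'k \<Rightarrow> 'a \<Rightarrow> 'a \<Rightarrow> 'a \<Rightarrow> 'a \<Rightarrow> bool" where
  "omega_rels \<phi> q \<alpha> \<beta> \<gamma> \<delta> \<longleftrightarrow>
     \<beta> * \<alpha> = \<alpha> * \<beta> \<and>
     \<gamma> * \<alpha> = \<phi> (q ^ 2) * (\<alpha> * \<gamma>) \<and>
     \<delta> * \<beta> = \<beta> * \<delta> \<and>
     \<delta> * \<gamma> = \<phi> (inverse q ^ 2) * (\<gamma> * \<delta>) \<and>
     \<gamma> * \<beta> = - (\<phi> (q ^ 2) * (\<beta> * \<gamma>)) \<and>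
     \<delta> * \<alpha> - \<alpha> * \<delta> = \<phi> (1 - q ^ 2) * (\<beta> * \<gamma>) \<and>
     \<beta> * \<beta> = 0 \<and> \<gamma> * \<gamma> = 0"

text \<open>Graded commutation of two generator matrices (the two tensor factors of the
  graded tensor product A \<otimes> A): u^i_j v^k_l = (-1)^(|u^i_j||v^k_l|) v^k_l u^i_j.\<close>
definition supercomm :: "(nat \<Rightarrow> nat) \<Rightarrow> (nat \<Rightarrow> nat \<Rightarrow> 'a::ring_1) \<Rightarrow> (nat \<Rightarrow> nat \<Rightarrow> 'a) \<Rightarrow> bool" where
  "supercomm p u v \<longleftrightarrow>
     (\<forall>i\<in>{1,2}. \<forall>j\<in>{1,2}. \<forall>k\<in>{1,2}. \<forall>l\<in>{1,2}.
        u i j * v k l = (-1) ^ ((p i + p j) * (p k + p l)) * (v k l * u i j))"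

definition mmul :: "(nat \<Rightarrow> nat \<Rightarrow> 'a::ring_1) \<Rightarrow> (nat \<Rightarrow> nat \<Rightarrow> 'a) \<Rightarrow> nat \<Rightarrow> nat \<Rightarrow> 'a" where
  "mmul u v i j = (\<Sum>k\<in>{1,2}. u i k * v k j)"

definition is_id2 :: "(nat \<Rightarrow> nat \<Rightarrow> 'a::ring_1) \<Rightarrow> bool" where
  "is_id2 M \<longleftrightarrow> (\<forall>i\<in>{1,2}. \<forall>j\<in>{1,2}. M i j = (if i = j then 1 else 0))"

definition is_inv :: "'a::ring_1 \<Rightarrow> 'a \<Rightarrow> bool" where
  "is_inv x y \<longleftrightarrow> x * y = 1 \<and> y * x = 1"

text \<open>The antipode matrix, with ai = alpha^-1 and di = delta^-1.\<close>
definition Smat :: "'a::ring_1 \<Rightarrow> 'a \<Rightarrow> 'a \<Rightarrow> 'a \<Rightarrow> 'a \<Rightarrow> 'a \<Rightarrow> nat \<Rightarrow> nat \<Rightarrow> 'a" where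
  "Smat \<alpha> \<beta> \<gamma> \<delta> ai di =
     umat (ai + ai * \<beta> * di * \<gamma> * ai) (- (ai * \<beta> * di))
          (- (di * \<gamma> * ai)) (di + di * \<gamma> * ai * \<beta> * di)"

text \<open>Super-determinant, with di = delta^-1.\<close>
definition sdet :: "'a::ring_1 \<Rightarrow> 'a \<Rightarrow> 'a \<Rightarrow> 'a \<Rightarrow> 'a \<Rightarrow> 'a" where
  "sdet \<alpha> \<beta> \<gamma> \<delta> di = \<alpha> * di - \<beta> * di * \<gamma> * di"

end

theory Submission imports Defs begin

definition orels :: "'a::ring_1 \<Rightarrow> 'a \<Rightarrow> 'a \<Rightarrow> 'a \<Rightarrow> 'a \<Rightarrow> 'a \<Rightarrow> bool" where
  "orels Q Qi a b c d \<longleftrightarrow> b*a = a*b \<and> c*a = Q*(Q*(a*c)) \<and> d*b = b*d \<and> d*c = Qi*(Qi*(c*d))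
     \<and> c*b = -(Q*(Q*(b*c))) \<and> d*a - a*d = b*c - Q*(Q*(b*c)) \<and> b*b = 0 \<and> c*c = 0"

definition frt_conj :: "'a::ring_1 \<Rightarrow> 'a \<Rightarrow> 'a \<Rightarrow> 'a \<Rightarrow> 'a \<Rightarrow> 'a \<Rightarrow> bool" where
  "frt_conj Q Qi a b c d \<longleftrightarrow>
    (Q * (a * a) = a * a * Q \<and>
     Q * (a * b) = b * a * Q \<and>
     Q * (b * a) = a * b * Qi + b * a * (Q - Qi) \<and>
     Q * (b * b) = - (b * b * Qi) \<and>
     Q * (a * c) + (Q - Qi) * (c * a) = c * a * Q \<and>
     Q * (a * d) + (Q - Qi) * (c * b) = d * a * Q \<and>
     (Q - Qi) * (d * a) - Q * (b * c) =
     c * b * Qi + d * a * (Q - Qi) \<and>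
     (Q - Qi) * (d * b) - Q * (b * d) =
     - (d * b * Qi) \<and>
     Qi * (c * a) = a * c * Q \<and>
     Qi * (c * b) = - (b * c * Q) \<and>
     Qi * (d * a) =
     a * d * Qi - b * c * (Q - Qi) \<and>
     Qi * (d * b) = b * d * Qi \<and>
     - (Qi * (c * c)) = c * c * Q \<and>
     Qi * (c * d) = d * c * Q \<and>
     Qi * (d * c) =
     c * d * Qi - d * c * (Q - Qi) \<and>
     Qi * (d * d) = d * d * Qi)"

definition sop_conj :: "'a::ring_1 \<Rightarrow> 'a \<Rightarrow> 'a \<Rightarrow> 'a \<Rightarrow> 'a \<Rightarrow> 'a \<Rightarrow> bool" where
  "sop_conj Q Qi m11 m12 m21 m22 \<longleftrightarrow> (Q * (m11 * m11) = m11 * m11 * Q \<and> Q * (m12 * m11) = m11 * m12 * Q \<and> Q * (m11 * m12) = m12 * m11 * Qi + m11 * m12 * (Q - Qi) \<and> - (Q * (m12 * m12)) = m12 * m12 * Qi \<and> Q * (m21 * m11) + (Q - Qi) * (m11 * m21) = m11 * m21 * Q \<and> Q * (m22 * m11) - (Q - Qi) * (m12 * m21) = m11 * m22 * Q \<and> Q * (m21 * m12) + (Q - Qi) * (m11 * m22) = m11 * m22 * (Q - Qi) - m12 * m21 * Qi \<and> (Q - Qi) * (m12 * m22) - Q * (m22 * m12) = - (m12 * m22 * Qi) \<and> Qi * (m11 * m21) = m21 * m11 * Q \<and> - (Qi * (m12 * m21)) = m21 * m12 * Q \<and> Qi * (m11 * m22) = m22 * m11 * Qi + m21 * m12 * (Q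 - Qi) \<and> Qi * (m12 * m22) = m22 * m12 * Qi \<and> Qi * (m21 * m21) = - (m21 * m21 * Q) \<and> Qi * (m22 * m21) = m21 * m22 * Q \<and> Qi * (m21 * m22) = m22 * m21 * Qi - m21 * m22 * (Q - Qi) \<and> Qi * (m22 * m22) = m22 * m22 * Qi)"

lemma kalg_facts:
  assumes "k_alg (\<phi>::'k::field \<Rightarrow> 'a::ring_1)"
  shows "\<phi> 0 = 0" "\<phi> (-x) = - \<phi> x" "\<phi> (x - y) = \<phi> x - \<phi> y" "\<phi> (x*y) = \<phi> x * \<phi> y"
    "\<phi> (x+y) = \<phi> x + \<phi> y" "\<phi> 1 = 1" "\<phi> (x^n) = \<phi> x ^ n" "\<phi> x * z = z * \<phi> x"
proof -
  have add: "\<And>x y. \<phi> (x+y) = \<phi> x + \<phi> y" and mul: "\<And>x y. \<phi> (x*y) = \<phi> x * \<phi> y"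
    and one: "\<phi> 1 = 1" and cen: "\<And>x z. \<phi> x * z = z * \<phi> x"
    using assms unfolding k_alg_def by blast+
  show z: "\<phi> 0 = 0" using add[of 0 0] by simp
  have "\<phi> x + \<phi> (-x) = 0" using add[of x "-x"] z by simp
  thus n: "\<phi> (-x) = - \<phi> x" by (metis add_eq_0_iff2 add.commute)
  have "\<phi> (x - y) = \<phi> (x + (-y))" by simp
  also have "\<dots> = \<phi> x + \<phi> (-y)" by (rule add)
  also have "\<phi> (-y) = - \<phi> y" using add[of y "-y"] z by (metis add.right_inverse add_eq_0_iff2 add.commute)
  finally show "\<phi> (x - y) = \<phi> x - \<phi> y" by simp
  show "\<phi> (x*y) = \<phi> x * \<phi> y" by (rule mul)
  show "\<phi> (x+y) = \<phi> x + \<phi> y" by (rule add)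
  show "\<phi> 1 = 1" by (rule one)
  show "\<phi> x * z = z * \<phi> x" by (rule cen)
  show "\<phi> (x^n) = \<phi> x ^ n" by (induction n) (simp_all add: one mul)
qed

lemma mk2: "x*y = (r::'a::ring_1) \<Longrightarrow> x*(y*z) = r*z" by (metis mult.assoc)
lemma lcancel: "(D::'a::ring_1)*d = 1 \<Longrightarrow> d*x = d*y \<Longrightarrow> x = y" by (metis mult.assoc mult_1_left)
lemma rcancel: "(a::'a::ring_1)*A = 1 \<Longrightarrow> x*a = y*a \<Longrightarrow> x = y" by (metis mult.assoc mult_1_right)

lemma abh1: "x + (y - z) = y \<Longrightarrow> x = (z::'a::ab_group_add)" by (simp add: algebra_simps)
lemma abh2: "x = y - (z - w) \<Longrightarrow> x - y = w - (z::'a::ab_group_add)" by (simp add: algebra_simps)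

locale sc = fixes Q Qi :: "'a::ring_1"
  assumes QQi: "Q*Qi = 1" and QiQ: "Qi*Q = 1" and Qc: "Q*x = x*Q" and Qic: "Qi*x = x*Qi"
begin
lemma sc_simps[simp]: "Q*(Qi*z) = z" "Qi*(Q*z) = z"
  by (metis QQi mult.assoc mult_1_left, metis QiQ mult.assoc mult_1_left)
lemma scal_gen: "x*Q = Q*x" "x*Qi = Qi*x" "x*(Q*z) = Q*(x*z)" "x*(Qi*z) = Qi*(x*z)"
  by (metis Qc, metis Qic, metis Qc mult.assoc, metis Qic mult.assoc)
lemma Qcanc: "Q*x = Q*y \<Longrightarrow> x = y" "Qi*x = Qi*y \<Longrightarrow> x = y"
  by (metis sc_simps(2), metis sc_simps(1))

lemma frt_to_orels:
  assumes W: "W*(Q+Qi) = 1" and F: "frt_conj Q Qi a b c d"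
  shows "orels Q Qi a b c d"
proof -
  from F have e2: "Q*(a*b) = b*a*Q" and e4: "Q*(b*b) = -(b*b*Qi)"
    and e5: "Q*(a*c) + (Q-Qi)*(c*a) = c*a*Q" and e10: "Qi*(c*b) = -(b*c*Q)"
    and e11: "Qi*(d*a) = a*d*Qi - b*c*(Q-Qi)" and e12: "Qi*(d*b) = b*d*Qi"
    and e13: "-(Qi*(c*c)) = c*c*Q" and e14: "Qi*(c*d) = d*c*Q" unfolding frt_conj_def by auto
  have "Q*(b*a) = Q*(a*b)" using e2 Qc[of "b*a"] by simp
  hence r1: "b*a = a*b" by (rule Qcanc(1))
  have "Q*(a*c) + (Q*(c*a) - Qi*(c*a)) = Q*(c*a)"
    using e5 Qc[of "c*a"] by (simp only: left_diff_distrib)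
  hence "Q*(a*c) = Qi*(c*a)" by (rule abh1)
  hence r2: "c*a = Q*(Q*(a*c))" by (metis sc_simps(1))
  have "Qi*(d*b) = Qi*(b*d)" using e12 Qic[of "b*d"] by simp
  hence r3: "d*b = b*d" by (rule Qcanc(2))
  have "Qi*(c*d) = Q*(d*c)" using e14 Qc[of "d*c"] by simp
  hence r4: "d*c = Qi*(Qi*(c*d))" by (metis sc_simps(2))
  have "Qi*(c*b) = -(Q*(b*c))" using e10 Qc[of "b*c"] by simp
  hence r5: "c*b = -(Q*(Q*(b*c)))" by (metis sc_simps(1) mult_minus_right)
  have t2: "b*c*(Q-Qi) = Q*(b*c) - Qi*(b*c)" by (metis right_diff_distrib Qc Qic)
  have "Qi*(d*a) = Qi*(a*d) - (Q*(b*c) - Qi*(b*c))" using e11 t2 Qic[of "a*d"] by simp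
  hence "Q*(Qi*(d*a)) = Q*(Qi*(a*d) - (Q*(b*c) - Qi*(b*c)))" by simp
  hence "d*a = a*d - (Q*(Q*(b*c)) - b*c)" by (simp only: right_diff_distrib sc_simps)
  hence r6: "d*a - a*d = b*c - Q*(Q*(b*c))" by (rule abh2)
  have "Q*(b*b) + Qi*(b*b) = 0" using e4 Qic[of "b*b"] by (simp add: eq_neg_iff_add_eq_0)
  hence "(Q+Qi)*(b*b) = 0" by (simp only: distrib_right)
  hence r7: "b*b = 0" by (metis W mult.assoc mult_1_left mult_zero_right)
  have "Qi*(c*c) + Q*(c*c) = 0" using e13 Qc[of "c*c"] by (simp add: neg_eq_iff_add_eq_0)
  hence "(Q+Qi)*(c*c) = 0" by (simp only: distrib_right add.commute)
  hence r8: "c*c = 0" by (metis W mult.assoc mult_1_left mult_zero_right)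
  show ?thesis unfolding orels_def using r1 r2 r3 r4 r5 r6 r7 r8 by blast
qed
end

locale omr = sc + fixes a b c d :: "'a::ring_1" assumes rel: "orels Q Qi a b c d"
begin
lemma nf1: "b*a = a*b" "c*a = Q*(Q*(a*c))" "d*b = b*d" "d*c = Qi*(Qi*(c*d))"
     "c*b = -(Q*(Q*(b*c)))" "d*a = a*d + b*c - Q*(Q*(b*c))" "b*b = 0" "c*c = 0"
  using rel unfolding orels_def by (auto simp: algebra_simps)
lemmas nf = nf1 nf1[THEN mk2]
lemmas scl = scal_gen[where x=a] scal_gen[where x=b] scal_gen[where x=c] scal_gen[where x=d]
lemma frt: "frt_conj Q Qi a b c d"
  unfolding frt_conj_def by (simp add: nf scl ring_distribs mult.assoc algebra_simps)
end

lemma (in sc) frt_iff: "W*(Q+Qi) = 1 \<Longrightarrow> frt_conj Q Qi a b c d \<longleftrightarrow> orels Q Qi a b c d"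
proof
  assume "W*(Q+Qi) = 1" "frt_conj Q Qi a b c d" thus "orels Q Qi a b c d" by (rule frt_to_orels)
next
  assume "orels Q Qi a b c d"
  then interpret omr Q Qi a b c d by unfold_locales
  show "frt_conj Q Qi a b c d" by (rule frt)
qed


locale omri = omr + fixes A D :: "'a::ring_1"
  assumes inv: "a*A = 1" "A*a = 1" "d*D = 1" "D*d = 1"
begin
lemmas inv2 = inv inv[THEN mk2]
lemmas scli = scal_gen[where x=A] scal_gen[where x=D]
lemmas N0 = nf scl scli inv2 ring_distribs mult.assoc
lemma i1: "b*A = A*b"
  by (rule rcancel[OF inv(1)]) (simp add: N0)
lemma i2: "c*A = Qi*(Qi*(A*c))"
  by (rule rcancel[OF inv(1)]) (simp add: N0)
lemma i3: "d*A = A*d + A*(A*(b*c)) - Qi*(Qi*(A*(A*(b*c))))"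
  by (rule rcancel[OF inv(1)]) (simp add: N0 algebra_simps)
lemma i4: "D*a = a*D + Q*(Q*(Q*(Q*(b*(c*(D*D)))))) - Q*(Q*(b*(c*(D*D))))"
  by (rule lcancel[OF inv(4)]) (simp add: N0 algebra_simps)
lemma i5: "D*b = b*D"
  by (rule lcancel[OF inv(4)]) (simp add: N0)
lemma i6: "D*c = Q*(Q*(c*D))"
  by (rule lcancel[OF inv(4)]) (simp add: N0)
lemmas ii = i1 i2 i3 i4 i5 i6
lemmas N1 = N0 ii ii[THEN mk2]
lemma i7: "D*A = A*D + A*(A*(b*(c*(D*D)))) - Q*(Q*(A*(A*(b*(c*(D*D))))))"
  by (rule lcancel[OF inv(4)], rule rcancel[OF inv(1)]) (simp add: N1 algebra_simps)
lemmas N = N1 i7 i7[THEN mk2]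

lemma Sprod: "Smat a b c d A D 1 1 * Smat a b c d A D 1 1 = A*A + Qi*(Qi*(A*(A*(A*(b*(c*D)))))) + A*(A*(A*(b*(c*D))))"
     "Smat a b c d A D 1 1 * Smat a b c d A D 1 2 = - A*(A*(b*D))"
     "Smat a b c d A D 1 1 * Smat a b c d A D 2 1 = - A*(A*(c*D))"
     "Smat a b c d A D 1 1 * Smat a b c d A D 2 2 = A*(A*(b*(c*(D*D)))) + A*D - Q*(Q*(A*(A*(b*(c*(D*D))))))"
     "Smat a b c d A D 1 2 * Smat a b c d A D 1 1 = - A*(A*(b*D))"
     "Smat a b c d A D 1 2 * Smat a b c d A D 1 2 = 0"
     "Smat a b c d A D 1 2 * Smat a b c d A D 2 1 = Q*(Q*(A*(A*(b*(c*(D*D))))))"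
     "Smat a b c d A D 1 2 * Smat a b c d A D 2 2 = - A*(b*(D*D))"
     "Smat a b c d A D 2 1 * Smat a b c d A D 1 1 = - Qi*(Qi*(A*(A*(c*D))))"
     "Smat a b c d A D 2 1 * Smat a b c d A D 1 2 = - A*(A*(b*(c*(D*D))))"
     "Smat a b c d A D 2 1 * Smat a b c d A D 2 1 = 0"
     "Smat a b c d A D 2 1 * Smat a b c d A D 2 2 = - A*(c*(D*D))"
     "Smat a b c d A D 2 2 * Smat a b c d A D 1 1 = A*D"
     "Smat a b c d A D 2 2 * Smat a b c d A D 1 2 = - A*(b*(D*D))"
     "Smat a b c d A D 2 2 * Smat a b c d A D 2 1 = - Q*(Q*(A*(c*(D*D))))"
     "Smat a b c d A D 2 2 * Smat a b c d A D 2 2 = D*D - Q*(Q*(A*(b*(c*(D*(D*D)))))) - Q*(Q*(Q*(Q*(A*(b*(c*(D*(D*D))))))))"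
  unfolding Smat_def umat_def by (simp_all add: N algebra_simps)
lemma Sscl: "Smat a b c d A D i j * Q = Q * Smat a b c d A D i j"
  "Smat a b c d A D i j * Qi = Qi * Smat a b c d A D i j"
  "Smat a b c d A D i j * (Q * z) = Q * (Smat a b c d A D i j * z)"
  "Smat a b c d A D i j * (Qi * z) = Qi * (Smat a b c d A D i j * z)"
  by (rule scal_gen)+
lemmas Sprod1 = Sprod[unfolded One_nat_def]
lemmas SP = Sscl Sprod Sprod[THEN mk2] Sprod1 Sprod1[THEN mk2]
lemma Ssop: "sop_conj Q Qi (Smat a b c d A D 1 1) (Smat a b c d A D 1 2) (Smat a b c d A D 2 1) (Smat a b c d A D 2 2)"
  unfolding sop_conj_def
  apply (intro conjI)
  apply (simp add: SP N algebra_simps)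
  apply (simp add: SP N algebra_simps)
  apply (simp add: SP N algebra_simps)
  apply (simp add: SP N algebra_simps)
  apply (simp add: SP N algebra_simps)
  apply (simp add: SP N algebra_simps)
  apply (simp add: SP N algebra_simps)
  apply (simp add: SP N algebra_simps)
  apply (simp add: SP N algebra_simps)
  apply (simp add: SP N algebra_simps)
  apply (simp add: SP N algebra_simps)
  apply (simp add: SP N algebra_simps)
  apply (simp add: SP N algebra_simps)
  apply (simp add: SP N algebra_simps)
  apply (simp add: SP N algebra_simps)
  apply (simp add: SP N algebra_simps)
  done
lemma S_left: "is_id2 (mmul (Smat a b c d A D) (umat a b c d))"
  unfolding is_id2_def mmul_def Smat_def umat_def by (simp add: N algebra_simps)
lemma S_right: "is_id2 (mmul (umat a b c d) (Smat a b c d A D))"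
  unfolding is_id2_def mmul_def Smat_def umat_def by (simp add: N algebra_simps)
lemma S11_inv: "is_inv (Smat a b c d A D 1 1) (a - b*D*c)"
  unfolding is_inv_def Smat_def umat_def by (simp add: N algebra_simps)
lemma S22_inv: "is_inv (Smat a b c d A D 2 2) (d - c*A*b)"
  unfolding is_inv_def Smat_def umat_def by (simp add: N algebra_simps)
lemma sdet_central: "\<forall>x\<in>{a, b, c, d}. sdet a b c d D * x = x * sdet a b c d D"
  unfolding sdet_def by (simp add: N algebra_simps)
end

locale omr2 = u: omr Q Qi a b c d + v: omr Q Qi e f g h for Q Qi a b c d e f g h +
  assumes scm0: "a*e = e*a" "a*f = f*a" "a*g = g*a" "a*h = h*a"
     "b*e = e*b" "b*f = -(f*b)" "b*g = -(g*b)" "b*h = h*b"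
     "c*e = e*c" "c*f = -(f*c)" "c*g = -(g*c)" "c*h = h*c"
     "d*e = e*d" "d*f = f*d" "d*g = g*d" "d*h = h*d"
begin
lemma scm1: "e*a = a*e" "e*b = b*e" "e*c = c*e" "e*d = d*e"
     "f*a = a*f" "f*b = -(b*f)" "f*c = -(c*f)" "f*d = d*f"
     "g*a = a*g" "g*b = -(b*g)" "g*c = -(c*g)" "g*d = d*g"
     "h*a = a*h" "h*b = b*h" "h*c = c*h" "h*d = d*h"
  using scm0 by (simp_all add: minus_equation_iff[of "f*b"] minus_equation_iff[of "f*c"]
      minus_equation_iff[of "g*b"] minus_equation_iff[of "g*c"])
lemmas scm = scm1 scm1[THEN mk2]
lemmas N2 = u.nf v.nf u.scl v.scl scm ring_distribs mult.assoc
lemma coprod: "orels Q Qi (a*e+b*g) (a*f+b*h) (c*e+d*g) (c*f+d*h)"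
  unfolding orels_def by (simp add: N2 algebra_simps)
end

locale omr2i = omr2 + fixes A D E H :: "'a::ring_1"
  assumes inv: "a*A = 1" "A*a = 1" "d*D = 1" "D*d = 1" "e*E = 1" "E*e = 1" "h*H = 1" "H*h = 1"
begin
sublocale u: omri Q Qi a b c d A D by unfold_locales (rule inv)+
sublocale v: omri Q Qi e f g h E H by unfold_locales (rule inv)+
lemmas N3 = u.N v.N scm
lemma x1: "E*a = a*E" "E*b = b*E" "E*c = c*E" "E*d = d*E"
  by (rule lcancel[OF inv(6)], simp add: N3)+
lemma x2: "H*a = a*H" "H*b = b*H" "H*c = c*H" "H*d = d*H"
  by (rule lcancel[OF inv(8)], simp add: N3)+
lemma x3: "e*A = A*e" "f*A = A*f" "g*A = A*g" "h*A = A*h"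
  by (rule rcancel[OF inv(1)], simp add: N3)+
lemma x4: "e*D = D*e" "f*D = D*f" "g*D = D*g" "h*D = D*h"
  by (rule rcancel[OF inv(3)], simp add: N3)+
lemmas x14 = x1 x2 x3 x4
lemmas N4 = N3 x14 x14[THEN mk2]
lemma x5a: "E*A = A*E" by (rule lcancel[OF inv(6)], rule rcancel[OF inv(1)], simp add: N4)
lemma x5b: "E*D = D*E" by (rule lcancel[OF inv(6)], rule rcancel[OF inv(3)], simp add: N4)
lemma x5c: "H*A = A*H" by (rule lcancel[OF inv(8)], rule rcancel[OF inv(1)], simp add: N4)
lemma x5d: "H*D = D*H" by (rule lcancel[OF inv(8)], rule rcancel[OF inv(3)], simp add: N4)
lemmas x5 = x5a x5b x5c x5d
lemmas N5 = N4 x5 x5[THEN mk2]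
lemma gl1: "is_inv (a*e + b*g) (E*A - E*A*b*g*E*A)"
  unfolding is_inv_def by (simp add: N5 algebra_simps)
lemma gl2: "is_inv (c*f + d*h) (H*D - H*D*c*f*H*D)"
  unfolding is_inv_def by (simp add: N5 algebra_simps)
lemma gl3: "sdet (a*e+b*g) (a*f+b*h) (c*e+d*g) (c*f+d*h) (H*D - H*D*c*f*H*D) = sdet a b c d D * sdet e f g h H"
proof -
  let ?x = "H*D - H*D*c*f*H*D"
  have s1: "?x*(c*e+d*g) = Q*(Q*(c*(D*(e*H)))) + Q*(Q*(g*H)) - Q*(Q*(Q*(Q*(c*(D*(f*(g*(H*H))))))))" by (simp add: N5 algebra_simps)
  have s2: "(a*f+b*h)*(Q*(Q*(c*(D*(e*H)))) + Q*(Q*(g*H)) - Q*(Q*(Q*(Q*(c*(D*(f*(g*(H*H))))))))) = Q*(Q*(a*(f*(g*H)))) + Q*(Q*(b*(c*(D*e)))) + b*g - Q*(Q*(a*(c*(D*(e*(f*H)))))) - Q*(Q*(Q*(Q*(b*(c*(D*(f*(g*H))))))))" by (simp add: N5 algebra_simps)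
  have s3: "(Q*(Q*(a*(f*(g*H)))) + Q*(Q*(b*(c*(D*e)))) + b*g - Q*(Q*(a*(c*(D*(e*(f*H)))))) - Q*(Q*(Q*(Q*(b*(c*(D*(f*(g*H)))))))))*?x = Q*(Q*(a*(D*(f*(g*(H*H)))))) + b*(D*(g*H)) + Q*(Q*(b*(c*(D*(D*(e*H)))))) - Q*(Q*(a*(c*(D*(D*(e*(f*(H*H)))))))) - Q*(Q*(Q*(Q*(b*(c*(D*(D*(f*(g*(H*H)))))))))) - Q*(Q*(Q*(Q*(b*(c*(D*(D*(f*(g*(H*H))))))))))" by (simp add: N5 algebra_simps)
  have s4: "(a*e+b*g)*?x = a*(D*(e*H)) + b*(D*(g*H)) - Q*(Q*(a*(c*(D*(D*(e*(f*(H*H)))))))) - Q*(Q*(Q*(Q*(b*(c*(D*(D*(f*(g*(H*H))))))))))" by (simp add: N5 algebra_simps)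
  have s5: "(a*(D*(e*H)) + b*(D*(g*H)) - Q*(Q*(a*(c*(D*(D*(e*(f*(H*H)))))))) - Q*(Q*(Q*(Q*(b*(c*(D*(D*(f*(g*(H*H))))))))))) - (Q*(Q*(a*(D*(f*(g*(H*H)))))) + b*(D*(g*H)) + Q*(Q*(b*(c*(D*(D*(e*H)))))) - Q*(Q*(a*(c*(D*(D*(e*(f*(H*H)))))))) - Q*(Q*(Q*(Q*(b*(c*(D*(D*(f*(g*(H*H)))))))))) - Q*(Q*(Q*(Q*(b*(c*(D*(D*(f*(g*(H*H))))))))))) = (a*D - b*D*c*D)*(e*H - f*H*g*H)" by (simp add: N5 algebra_simps)
  have "(a*f+b*h)*?x*(c*e+d*g)*?x = ((a*f+b*h)*(?x*(c*e+d*g)))*?x" by (simp only: mult.assoc)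
  thus ?thesis unfolding sdet_def using s1 s2 s3 s4 s5 by simp
qed
end

locale ctx = fixes q :: "'k::field" and \<phi> :: "'k \<Rightarrow> 'a::ring_1"
  assumes q0: "q \<noteq> 0" and q2: "1 + q^2 \<noteq> 0" and alg: "k_alg \<phi>"
begin
lemmas kf = kalg_facts[OF alg]
sublocale sc "\<phi> q" "\<phi> (inverse q)"
proof
  show "\<phi> q * \<phi> (inverse q) = 1" "\<phi> (inverse q) * \<phi> q = 1"
    using q0 by (simp_all flip: kf(4) add: kf(6))
qed (rule kf(8))+

lemma W: "\<phi> (q / (1 + q^2)) * (\<phi> q + \<phi> (inverse q)) = 1"
proof -
  have h: "q + inverse q = (1+q^2)/q" using q0 by (simp add: field_simps power2_eq_square)
  have "q / (1 + q^2) * (q + inverse q) = 1" unfolding h using q0 q2 by simp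
  thus ?thesis by (metis kf(4) kf(5) kf(6))
qed

lemma omega_iff: "omega_rels \<phi> q a b c d \<longleftrightarrow> orels (\<phi> q) (\<phi> (inverse q)) a b c d"
  unfolding omega_rels_def orels_def
  by (simp add: kf(1-7) power2_eq_square algebra_simps)

lemma frt_expand: "FRT \<phi> pOm (Rsup pOm (ROm q)) (umat a b c d) \<longleftrightarrow> frt_conj (\<phi> q) (\<phi> (inverse q)) a b c d"
  unfolding FRT_def FRT_gen_def Rsup_def ROm_def pOm_def umat_def frt_conj_def
  by (simp add: kf(1-7))

lemma part2: "FRT \<phi> pOm (Rsup pOm (ROm q)) (umat a b c d) \<longleftrightarrow> omega_rels \<phi> q a b c d"
  using frt_expand frt_iff[OF W] omega_iff by blast

lemma sop_expand: "FRT_sop \<phi> pOm (Rsup pOm (ROm q)) M \<longleftrightarrow> sop_conj (\<phi> q) (\<phi> (inverse q)) (M 1 1) (M 1 2) (M 2 1) (M 2 2)"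
  unfolding FRT_sop_def FRT_gen_def Rsup_def ROm_def pOm_def sop_conj_def
  by (simp add: kf(1-7))

lemma sop: assumes "orels (\<phi> q) (\<phi> (inverse q)) a b c d" "is_inv a A" "is_inv d D"
  shows "FRT_sop \<phi> pOm (Rsup pOm (ROm q)) (Smat a b c d A D)"
proof -
  interpret omri "\<phi> q" "\<phi> (inverse q)" a b c d A D
    using assms unfolding is_inv_def by unfold_locales auto
  show ?thesis unfolding sop_expand by (rule Ssop)
qed

lemma part5:
  assumes "omega_rels \<phi> q (u 1 1) (u 1 2) (u 2 1) (u 2 2)" "omega_rels \<phi> q (v 1 1) (v 1 2) (v 2 1) (v 2 2)"
    "supercomm pOm u v"
  shows "omega_rels \<phi> q (mmul u v 1 1) (mmul u v 1 2) (mmul u v 2 1) (mmul u v 2 2)"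
proof -
  have o1: "orels (\<phi> q) (\<phi> (inverse q)) (u 1 1) (u 1 2) (u 2 1) (u 2 2)" using assms(1) omega_iff by blast
  have o2: "orels (\<phi> q) (\<phi> (inverse q)) (v 1 1) (v 1 2) (v 2 1) (v 2 2)" using assms(2) omega_iff by blast
  have s: "u 1 1 * v 1 1 = v 1 1 * u 1 1 \<and> u 1 1 * v 1 2 = v 1 2 * u 1 1 \<and> u 1 1 * v 2 1 = v 2 1 * u 1 1 \<and> u 1 1 * v 2 2 = v 2 2 * u 1 1 \<and>
    u 1 2 * v 1 1 = v 1 1 * u 1 2 \<and> u 1 2 * v 1 2 = -(v 1 2 * u 1 2) \<and> u 1 2 * v 2 1 = -(v 2 1 * u 1 2) \<and> u 1 2 * v 2 2 = v 2 2 * u 1 2 \<and>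
    u 2 1 * v 1 1 = v 1 1 * u 2 1 \<and> u 2 1 * v 1 2 = -(v 1 2 * u 2 1) \<and> u 2 1 * v 2 1 = -(v 2 1 * u 2 1) \<and> u 2 1 * v 2 2 = v 2 2 * u 2 1 \<and>
    u 2 2 * v 1 1 = v 1 1 * u 2 2 \<and> u 2 2 * v 1 2 = v 1 2 * u 2 2 \<and> u 2 2 * v 2 1 = v 2 1 * u 2 2 \<and> u 2 2 * v 2 2 = v 2 2 * u 2 2"
    using assms(3) unfolding supercomm_def pOm_def by simp
  interpret omr2 "\<phi> q" "\<phi> (inverse q)" "u 1 1" "u 1 2" "u 2 1" "u 2 2" "v 1 1" "v 1 2" "v 2 1" "v 2 2"
    using o1 o2 s by unfold_locales auto
  show ?thesis unfolding omega_iff mmul_def using coprod by simp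
qed

lemma part6:
  assumes "omega_rels \<phi> q a b c d" "is_inv a A" "is_inv d D"
  shows "is_id2 (mmul (Smat a b c d A D) (umat a b c d))
        \<and> is_id2 (mmul (umat a b c d) (Smat a b c d A D))
        \<and> FRT_sop \<phi> pOm (Rsup pOm (ROm q)) (Smat a b c d A D)
        \<and> (\<exists>x. is_inv (Smat a b c d A D 1 1) x)
        \<and> (\<exists>x. is_inv (Smat a b c d A D 2 2) x)
        \<and> (\<forall>x\<in>{a, b, c, d}. sdet a b c d D * x = x * sdet a b c d D)
        \<and> sdet a (-b) (-c) d D = sdet a b c d D"
proof -
  have o: "orels (\<phi> q) (\<phi> (inverse q)) a b c d" using assms(1) omega_iff by blast
  interpret omri "\<phi> q" "\<phi> (inverse q)" a b c d A D
    using o assms(2,3) unfolding is_inv_def by unfold_locales auto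
  show ?thesis using S_left S_right sop[OF o assms(2,3)] S11_inv S22_inv sdet_central
    unfolding sdet_def by auto
qed

lemma inv_unique: "is_inv (m::'b::ring_1) x \<Longrightarrow> is_inv m y \<Longrightarrow> x = y"
  unfolding is_inv_def by (metis mult.assoc mult_1_left mult_1_right)

lemma part8:
  assumes "omega_rels \<phi> q (u 1 1) (u 1 2) (u 2 1) (u 2 2)" "is_inv (u 1 1) ai1" "is_inv (u 2 2) di1"
    "omega_rels \<phi> q (v 1 1) (v 1 2) (v 2 1) (v 2 2)" "is_inv (v 1 1) ai2" "is_inv (v 2 2) di2"
    "supercomm pOm u v"
  shows "(\<exists>x. is_inv (mmul u v 1 1) x) \<and> (\<exists>x. is_inv (mmul u v 2 2) x)
        \<and> (\<forall>x. is_inv (mmul u v 2 2) x \<longrightarrow>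
              sdet (mmul u v 1 1) (mmul u v 1 2) (mmul u v 2 1) (mmul u v 2 2) x
              = sdet (u 1 1) (u 1 2) (u 2 1) (u 2 2) di1 * sdet (v 1 1) (v 1 2) (v 2 1) (v 2 2) di2)"
proof -
  have o1: "orels (\<phi> q) (\<phi> (inverse q)) (u 1 1) (u 1 2) (u 2 1) (u 2 2)" using assms(1) omega_iff by blast
  have o2: "orels (\<phi> q) (\<phi> (inverse q)) (v 1 1) (v 1 2) (v 2 1) (v 2 2)" using assms(4) omega_iff by blast
  have s: "u 1 1 * v 1 1 = v 1 1 * u 1 1 \<and> u 1 1 * v 1 2 = v 1 2 * u 1 1 \<and> u 1 1 * v 2 1 = v 2 1 * u 1 1 \<and> u 1 1 * v 2 2 = v 2 2 * u 1 1 \<and>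
    u 1 2 * v 1 1 = v 1 1 * u 1 2 \<and> u 1 2 * v 1 2 = -(v 1 2 * u 1 2) \<and> u 1 2 * v 2 1 = -(v 2 1 * u 1 2) \<and> u 1 2 * v 2 2 = v 2 2 * u 1 2 \<and>
    u 2 1 * v 1 1 = v 1 1 * u 2 1 \<and> u 2 1 * v 1 2 = -(v 1 2 * u 2 1) \<and> u 2 1 * v 2 1 = -(v 2 1 * u 2 1) \<and> u 2 1 * v 2 2 = v 2 2 * u 2 1 \<and>
    u 2 2 * v 1 1 = v 1 1 * u 2 2 \<and> u 2 2 * v 1 2 = v 1 2 * u 2 2 \<and> u 2 2 * v 2 1 = v 2 1 * u 2 2 \<and> u 2 2 * v 2 2 = v 2 2 * u 2 2"
    using assms(7) unfolding supercomm_def pOm_def by simp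
  interpret omr2i "\<phi> q" "\<phi> (inverse q)" "u 1 1" "u 1 2" "u 2 1" "u 2 2" "v 1 1" "v 1 2" "v 2 1" "v 2 2" ai1 di1 ai2 di2
    using o1 o2 s assms(2,3,5,6) unfolding is_inv_def by unfold_locales auto
  have m: "mmul u v 1 1 = u 1 1 * v 1 1 + u 1 2 * v 2 1" "mmul u v 1 2 = u 1 1 * v 1 2 + u 1 2 * v 2 2"
    "mmul u v 2 1 = u 2 1 * v 1 1 + u 2 2 * v 2 1" "mmul u v 2 2 = u 2 1 * v 1 2 + u 2 2 * v 2 2"
    unfolding mmul_def by simp_all
  show ?thesis unfolding m using gl1 gl2 gl3 inv_unique by metis
qed
end


theorem mainTheorem9:
  fixes q :: "'k::field" and \<phi> :: "'k \<Rightarrow> 'a::ring_1"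
  assumes q0: "q \<noteq> 0" and q2: "1 + q ^ 2 \<noteq> 0" and alg: "k_alg \<phi>"
  shows
    \<comment> \<open>R_Omega is superizable w.r.t. p(1)=0, p(2)=1\<close>
    "superizable pOm (ROm q)
     \<comment> \<open>presentation of A(underline R_Omega): the super FRT relations are equivalent to the listed ones\<close>
   \<and> (\<forall>\<alpha> \<beta> \<gamma> \<delta> :: 'a.
        FRT \<phi> pOm (Rsup pOm (ROm q)) (umat \<alpha> \<beta> \<gamma> \<delta>) \<longleftrightarrow> omega_rels \<phi> q \<alpha> \<beta> \<gamma> \<delta>)
     \<comment> \<open>the grading with alpha, delta even and beta, gamma odd is compatible with the relations\<close>
   \<and> (\<forall>\<alpha> \<beta> \<gamma> \<delta> :: 'a. omega_rels \<phi> q \<alpha> \<beta> \<gamma> \<delta> \<longrightarrow> omega_rels \<phi> q \<alpha> (-\<beta>) (-\<gamma>) \<delta>)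
     \<comment> \<open>counit epsilon(u) = id is well defined\<close>
   \<and> omega_rels (\<lambda>x. x) q (1::'k) 0 0 1
     \<comment> \<open>super-coproduct Delta u = u \<otimes> u into the graded tensor product is well defined\<close>
   \<and> (\<forall>u v :: nat \<Rightarrow> nat \<Rightarrow> 'a.
        omega_rels \<phi> q (u 1 1) (u 1 2) (u 2 1) (u 2 2) \<and>
        omega_rels \<phi> q (v 1 1) (v 1 2) (v 2 1) (v 2 2) \<and> supercomm pOm u v \<longrightarrow>
        omega_rels \<phi> q (mmul u v 1 1) (mmul u v 1 2) (mmul u v 2 1) (mmul u v 2 2))
     \<comment> \<open>GL^Omega_q(1|1): antipode and super-determinant\<close>
   \<and> (\<forall>\<alpha> \<beta> \<gamma> \<delta> ai di :: 'a.
        omega_rels \<phi> q \<alpha> \<beta> \<gamma> \<delta> \<and> is_inv \<alpha> ai \<and> is_inv \<delta> di \<longrightarrow>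
          is_id2 (mmul (Smat \<alpha> \<beta> \<gamma> \<delta> ai di) (umat \<alpha> \<beta> \<gamma> \<delta>))
        \<and> is_id2 (mmul (umat \<alpha> \<beta> \<gamma> \<delta>) (Smat \<alpha> \<beta> \<gamma> \<delta> ai di))
        \<and> FRT_sop \<phi> pOm (Rsup pOm (ROm q)) (Smat \<alpha> \<beta> \<gamma> \<delta> ai di)
        \<and> (\<exists>x. is_inv (Smat \<alpha> \<beta> \<gamma> \<delta> ai di 1 1) x)
        \<and> (\<exists>x. is_inv (Smat \<alpha> \<beta> \<gamma> \<delta> ai di 2 2) x)
        \<and> (\<forall>x\<in>{\<alpha>, \<beta>, \<gamma>, \<delta>}. sdet \<alpha> \<beta> \<gamma> \<delta> di * x = x * sdet \<alpha> \<beta> \<gamma> \<delta> di)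
        \<and> sdet \<alpha> (-\<beta>) (-\<gamma>) \<delta> di = sdet \<alpha> \<beta> \<gamma> \<delta> di)
     \<comment> \<open>localized coproduct is well defined and the super-determinant is group-like\<close>
   \<and> sdet (1::'a) 0 0 1 1 = 1
   \<and> (\<forall>(u :: nat \<Rightarrow> nat \<Rightarrow> 'a) v ai1 di1 ai2 di2.
        omega_rels \<phi> q (u 1 1) (u 1 2) (u 2 1) (u 2 2) \<and> is_inv (u 1 1) ai1 \<and> is_inv (u 2 2) di1 \<and>
        omega_rels \<phi> q (v 1 1) (v 1 2) (v 2 1) (v 2 2) \<and> is_inv (v 1 1) ai2 \<and> is_inv (v 2 2) di2 \<and>
        supercomm pOm u v \<longrightarrow>
          (\<exists>x. is_inv (mmul u v 1 1) x) \<and> (\<exists>x. is_inv (mmul u v 2 2) x)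
        \<and> (\<forall>x. is_inv (mmul u v 2 2) x \<longrightarrow>
              sdet (mmul u v 1 1) (mmul u v 1 2) (mmul u v 2 1) (mmul u v 2 2) x
              = sdet (u 1 1) (u 1 2) (u 2 1) (u 2 2) di1 * sdet (v 1 1) (v 1 2) (v 2 1) (v 2 2) di2))"
proof -
  interpret C: ctx q \<phi> using q0 q2 alg by unfold_locales
  have P1: "superizable pOm (ROm q)" unfolding superizable_def ROm_def pOm_def by auto
  show ?thesis
    using P1 C.part2 C.part5 C.part6 C.part8
    by (auto simp: omega_rels_def sdet_def)
qed

end
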